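(* Let $W$ be a standard one-dimensional Brownian motion, $T>0$, and let $f:\mathbb{R}\to\mathbb{R}$ be bounded with ${\rm osc}_f(\delta)\le C\delta^\alpha$ for some $\alpha\in(0,1]$, $C>0$ and all sufficiently small $\delta>0$. Let $(n_\varepsilon)_{\varepsilon>0}$ be positive integers with $n_\varepsilon\nearrow\infty$ as $\varepsilon\to0$, $\delta_\varepsilon=T/n_\varepsilon$, $s_i=i\delta_\varepsilon$ ($i=0,\dots,n_\varepsilon$), $q_\varepsilon=2\sqrt{\delta_\varepsilon|\log\delta_\varepsilon|}$, $i(t)=\min\{j\in\{0,\dots,n_\varepsilon\}:s_j\ge t\}$, and \[ L_{\varepsilon,P_\varepsilon}(t)=\sum_{i=1}^{i(t)}\big(f(\varepsilon W(s_i))-f(\varepsilon W(s_{i-1}))\big)\big(W(s_i)-W(s_{i-1})\big),\qquad t\in[0,T]. \] Then there is a positive constant $K$ such that for any $\delta>0$ and $\varepsilon>0$, \[ \mathsf{P}\Big\{\sup_{t\in[0,T]}|L_{\varepsilon,P_\varepsilon}(t)|>\delta\Big\}\le\mathsf{P}\Big\{|\log\delta_\varepsilon|\,{\rm osc}_f(\varepsilon q_\varepsilon)>\frac{q_\varepsilon\delta}{4T}\Big\}+K\delta_\varepsilon. \] (The first probability on the right is either $0$ or $1$.)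
   Context: ${\rm osc}_f(\delta)=\sup_{|t-s|<\delta}|f(s)-f(t)|$. *)

theory Defs
  imports "HOL-Probability.Probability"
begin

definition std_brownian_motion :: "'a measure \<Rightarrow> (real \<Rightarrow> 'a \<Rightarrow> real) \<Rightarrow> bool" where
  "std_brownian_motion M W \<longleftrightarrow>
     prob_space M \<and>
     (\<forall>t\<ge>0. W t \<in> borel_measurable M) \<and>
     (\<forall>\<omega>\<in>space M. W 0 \<omega> = 0) \<and>
     (\<forall>\<omega>\<in>space M. continuous_on {0..} (\<lambda>t. W t \<omega>)) \<and>
     (\<forall>s t. 0 \<le> s \<and> s < t \<longrightarrow>
        distributed M lborel (\<lambda>\<omega>. W t \<omega> - W s \<omega>)
          (\<lambda>x. ennreal (normal_density 0 (sqrt (t - s)) x))) \<and>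
     (\<forall>(n::nat) (u::nat \<Rightarrow> real). 0 \<le> u 0 \<and> (\<forall>i<n. u i < u (Suc i)) \<longrightarrow>
        prob_space.indep_vars M (\<lambda>_. borel) (\<lambda>i \<omega>. W (u (Suc i)) \<omega> - W (u i) \<omega>) {..<n})"

text \<open>Modulus of oscillation osc_f(d) = sup over |t - s| < d of |f s - f t|
  (the extra 0 only matters for d \<le> 0, where the set of pairs is empty).\<close>
definition osc :: "(real \<Rightarrow> real) \<Rightarrow> real \<Rightarrow> real" where
  "osc f d = Sup ({\<bar>f s - f t\<bar> | s t. \<bar>t - s\<bar> < d} \<union> {0})"

definition grid_index :: "real \<Rightarrow> nat \<Rightarrow> real \<Rightarrow> nat" where
  "grid_index T n t = (LEAST j. j \<le> n \<and> real j * (T / real n) \<ge> t)"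

definition disc_L :: "(real \<Rightarrow> real) \<Rightarrow> (real \<Rightarrow> 'a \<Rightarrow> real) \<Rightarrow> real \<Rightarrow> nat \<Rightarrow> real \<Rightarrow> real \<Rightarrow> 'a \<Rightarrow> real" where
  "disc_L f W T n \<epsilon> t \<omega> =
     (\<Sum>i\<in>{1..grid_index T n t}.
        (f (\<epsilon> * W (real i * (T / real n)) \<omega>) - f (\<epsilon> * W (real (i - 1) * (T / real n)) \<omega>)) *
        (W (real i * (T / real n)) \<omega> - W (real (i - 1) * (T / real n)) \<omega>))"

end

theory Submission imports Defs begin

lemma nd_shift:
  fixes q s x :: real
  assumes "s > 0"
  shows "normal_density 0 s x * exp (q * x / s^2 - (q^2) / s^2) = exp (- (q^2) / (2 * s^2)) * normal_density q s x"
proof -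
  have "exp (-(x - 0)\<^sup>2/ (2 * s\<^sup>2)) * exp (q * x / s^2 - (q^2) / s^2) = exp (- (q^2) / (2 * s^2)) * exp (-(x - q)\<^sup>2/ (2 * s\<^sup>2))"
    unfolding exp_add[symmetric] using assms by (simp add: field_simps power2_eq_square)
  then show ?thesis unfolding normal_density_def by (metis (no_types, lifting) mult.assoc mult.left_commute)
qed

lemma nn_nd: assumes "s > 0" shows "(\<integral>\<^sup>+x. ennreal (normal_density m s x) \<partial>lborel) = 1"
proof -
  interpret prob_space "density lborel (normal_density m s)" using prob_space_normal_density assms by blast
  have "emeasure (density lborel (normal_density m s)) UNIV = 1" using emeasure_space_1 by simp
  then show ?thesis by (simp add: emeasure_density)
qed

lemma half_tail:
  fixes q s :: real assumes s: "s > 0"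
  shows "(\<integral>\<^sup>+x. ennreal (normal_density 0 s x * exp (q * x / s^2 - (q^2) / s^2)) \<partial>lborel) = ennreal (exp (- (q^2) / (2 * s^2)))"
proof -
  have "(\<integral>\<^sup>+x. ennreal (normal_density 0 s x * exp (q * x / s^2 - (q^2) / s^2)) \<partial>lborel)
     = (\<integral>\<^sup>+x. ennreal (exp (- (q^2) / (2 * s^2))) * ennreal (normal_density q s x) \<partial>lborel)"
    by (simp add: nd_shift[OF s] ennreal_mult)
  also have "\<dots> = ennreal (exp (- (q^2) / (2 * s^2)))"
    by (subst nn_integral_cmult) (auto simp: nn_nd[OF s])
  finally show ?thesis .
qed

lemma normal_tail:
  fixes q s :: real assumes s: "s > 0" and q: "q \<ge> 0"
  shows "(\<integral>\<^sup>+x. ennreal (normal_density 0 s x) * indicator {x. q \<le> \<bar>x\<bar>} x \<partial>lborel) \<le> ennreal (2 * exp (- (q^2) / (2 * s^2)))"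
proof -
  have pt: "ennreal (normal_density 0 s x) * indicator {x. q \<le> \<bar>x\<bar>} x \<le>
     ennreal (normal_density 0 s x * exp (q * x / s^2 - (q^2) / s^2)) + ennreal (normal_density 0 s x * exp ((-q) * x / s^2 - ((-q)^2) / s^2))" for x
  proof (cases "q \<le> \<bar>x\<bar>")
    case True
    have "1 \<le> exp (q * x / s^2 - (q^2) / s^2) + exp ((-q) * x / s^2 - ((-q)^2) / s^2)"
    proof (cases "x \<ge> 0")
      case True
      then have "q * x / s^2 - (q^2) / s^2 \<ge> 0" using \<open>q \<le> \<bar>x\<bar>\<close> q s
        by (simp add: field_simps power2_eq_square mult_left_mono)
      then have "1 \<le> exp (q * x / s^2 - (q^2) / s^2)" by simp
      then show ?thesis by (smt (verit) exp_gt_zero)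
    next
      case False
      have "q * q \<le> q * (-x)" using \<open>q \<le> \<bar>x\<bar>\<close> q False by (intro mult_left_mono) auto
      then have "(-q) * x / s^2 - ((-q)^2) / s^2 \<ge> 0" using s
        by (simp add: field_simps power2_eq_square)
      then have "1 \<le> exp ((-q) * x / s^2 - ((-q)^2) / s^2)" by simp
      then show ?thesis by (smt (verit) exp_gt_zero)
    qed
    then have "normal_density 0 s x * 1 \<le> normal_density 0 s x * exp (q * x / s^2 - (q^2) / s^2) + normal_density 0 s x * exp ((-q) * x / s^2 - ((-q)^2) / s^2)"
      by (metis distrib_left mult_left_mono normal_density_nonneg)
    then show ?thesis using True
      by (simp add: ennreal_plus[symmetric] del: ennreal_plus)
  qed simp
  have "(\<integral>\<^sup>+x. ennreal (normal_density 0 s x) * indicator {x. q \<le> \<bar>x\<bar>} x \<partial>lborel) \<le>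
     (\<integral>\<^sup>+x. ennreal (normal_density 0 s x * exp (q * x / s^2 - (q^2) / s^2)) + ennreal (normal_density 0 s x * exp ((-q) * x / s^2 - ((-q)^2) / s^2)) \<partial>lborel)"
    by (rule nn_integral_mono) (rule pt)
  also have "\<dots> = ennreal (exp (- (q^2) / (2 * s^2))) + ennreal (exp (- ((-q)^2) / (2 * s^2)))"
    apply (subst nn_integral_add)
    apply measurable
    using half_tail[OF s, of q] half_tail[OF s, of "-q"] by simp
  also have "\<dots> = ennreal (2 * exp (- (q^2) / (2 * s^2)))"
    by (simp add: ennreal_plus[symmetric] del: ennreal_plus)
  finally show ?thesis .
qed
lemma bm_tail:
  assumes BM: "std_brownian_motion M W" and ab: "0 \<le> a" "a < b" and q: "q \<ge> 0"
  shows "measure M {\<omega> \<in> space M. q \<le> \<bar>W b \<omega> - W a \<omega>\<bar>} \<le> 2 * exp (- (q^2) / (2 * (b - a)))"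
proof -
  have P: "prob_space M" using BM unfolding std_brownian_motion_def by blast
  interpret prob_space M by (rule P)
  have D: "distributed M lborel (\<lambda>\<omega>. W b \<omega> - W a \<omega>) (\<lambda>x. ennreal (normal_density 0 (sqrt (b - a)) x))"
    using BM ab unfolding std_brownian_motion_def by blast
  have S: "sqrt (b - a) > 0" using ab by simp
  have eq: "{\<omega> \<in> space M. q \<le> \<bar>W b \<omega> - W a \<omega>\<bar>} = (\<lambda>\<omega>. W b \<omega> - W a \<omega>) -` {x. q \<le> \<bar>x\<bar>} \<inter> space M" by auto
  have "emeasure M {\<omega> \<in> space M. q \<le> \<bar>W b \<omega> - W a \<omega>\<bar>} = (\<integral>\<^sup>+x. ennreal (normal_density 0 (sqrt (b - a)) x) * indicator {x. q \<le> \<bar>x\<bar>} x \<partial>lborel)"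
    unfolding eq by (rule distributed_emeasure[OF D]) measurable
  also have "\<dots> \<le> ennreal (2 * exp (- (q^2) / (2 * (sqrt (b - a))^2)))"
    by (rule normal_tail[OF S q])
  finally have "emeasure M {\<omega> \<in> space M. q \<le> \<bar>W b \<omega> - W a \<omega>\<bar>} \<le> ennreal (2 * exp (- (q^2) / (2 * (b - a))))"
    using ab by simp
  then show ?thesis by (simp add: emeasure_eq_measure)
qed

lemma osc_facts:
  assumes f_bdd: "bounded (range f)"
  shows "osc f d \<ge> 0" and "\<bar>t - s\<bar> < d \<Longrightarrow> \<bar>f s - f t\<bar> \<le> osc f d"
proof -
  obtain B where B: "\<And>x. \<bar>f x\<bar> \<le> B" using f_bdd unfolding bounded_iff by auto
  have bdd: "bdd_above ({\<bar>f s - f t\<bar> | s t. \<bar>t - s\<bar> < d} \<union> {0})"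
  proof (rule bdd_aboveI)
    fix x assume "x \<in> {\<bar>f s - f t\<bar> | s t. \<bar>t - s\<bar> < d} \<union> {0}"
    then show "x \<le> 2 * B" using B[of 0]
      by auto (smt (verit) B)
  qed
  show "osc f d \<ge> 0" unfolding osc_def by (rule cSup_upper[OF _ bdd]) auto
  show "\<bar>t - s\<bar> < d \<Longrightarrow> \<bar>f s - f t\<bar> \<le> osc f d" unfolding osc_def
    by (rule cSup_upper[OF _ bdd]) auto
qed

theorem lemma3:
  fixes M :: "'a measure" and W :: "real \<Rightarrow> 'a \<Rightarrow> real"
    and T C \<alpha> :: real and f :: "real \<Rightarrow> real" and n :: "real \<Rightarrow> nat"
  assumes BM: "std_brownian_motion M W"
    and T: "T > 0"
    and f_bdd: "bounded (range f)"
    and alpha: "0 < \<alpha>" "\<alpha> \<le> 1" and C: "C > 0"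
    and osc_hoelder: "\<exists>d0>0. \<forall>d. 0 < d \<and> d < d0 \<longrightarrow> osc f d \<le> C * d powr \<alpha>"
    and n_pos: "\<And>\<epsilon>. \<epsilon> > 0 \<Longrightarrow> n \<epsilon> > 0"
    and n_mono: "\<And>\<epsilon>1 \<epsilon>2. 0 < \<epsilon>1 \<Longrightarrow> \<epsilon>1 \<le> \<epsilon>2 \<Longrightarrow> n \<epsilon>2 \<le> n \<epsilon>1"
    and n_lim: "filterlim n at_top (at_right 0)"
  shows "\<exists>K>0. \<forall>\<delta>>0. \<forall>\<epsilon>>0.
     (let d\<epsilon> = T / real (n \<epsilon>); q\<epsilon> = 2 * sqrt (d\<epsilon> * \<bar>ln d\<epsilon>\<bar>) in
      measure M {\<omega> \<in> space M. (SUP t\<in>{0..T}. \<bar>disc_L f W T (n \<epsilon>) \<epsilon> t \<omega>\<bar>) > \<delta>}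
        \<le> measure M {\<omega> \<in> space M. \<bar>ln d\<epsilon>\<bar> * osc f (\<epsilon> * q\<epsilon>) > q\<epsilon> * \<delta> / (4 * T)}
           + K * d\<epsilon>)"
proof -
  have P: "prob_space M" using BM unfolding std_brownian_motion_def by blast
  interpret prob_space M by (rule P)
  have Wm: "\<And>t. t \<ge> 0 \<Longrightarrow> W t \<in> borel_measurable M" using BM unfolding std_brownian_motion_def by blast
  define K where "K = 1 + 2 * T"
  have K: "K > 0" using T unfolding K_def by simp
  have main: "measure M {\<omega> \<in> space M. (SUP t\<in>{0..T}. \<bar>disc_L f W T N \<epsilon> t \<omega>\<bar>) > \<delta>}
        \<le> measure M {\<omega> \<in> space M. \<bar>ln d\<bar> * osc f (\<epsilon> * q) > q * \<delta> / (4 * T)} + K * d"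
    if \<delta>: "\<delta> > 0" and \<epsilon>: "\<epsilon> > 0" and N: "N > 0" and d: "d = T / real N"
      and q: "q = 2 * sqrt (d * \<bar>ln d\<bar>)" for \<delta> \<epsilon> N d q
  proof -
    define A where "A = {\<omega> \<in> space M. (SUP t\<in>{0..T}. \<bar>disc_L f W T N \<epsilon> t \<omega>\<bar>) > \<delta>}"
    define B where "B = {\<omega> \<in> space M. \<bar>ln d\<bar> * osc f (\<epsilon> * q) > q * \<delta> / (4 * T)}"
    have dpos: "d > 0" using d T N by simp
    have Nd: "real N * d = T" using d N by simp
    have A1: "measure M A \<le> 1" by simp
    have B0: "measure M B \<ge> 0" by simp
    have "measure M A \<le> measure M B + K * d"
    proof (cases "d < 1")
      case False
      then have "K * d \<ge> 1" unfolding K_def using T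
        by (smt (verit, best) mult_le_cancel_left1 mult_nonneg_nonneg)
      then show ?thesis using A1 B0 by linarith
    next
      case True
      have L: "\<bar>ln d\<bar> > 0" using True dpos by simp
      have qpos: "q > 0" unfolding q using L dpos by simp
      show ?thesis
      proof (cases "\<bar>ln d\<bar> * osc f (\<epsilon> * q) > q * \<delta> / (4 * T)")
        case True
        then have "B = space M" unfolding B_def by auto
        then have "measure M B = 1" by (simp add: prob_space)
        then show ?thesis using A1 K dpos by (smt (verit) mult_pos_pos)
      next
        case notB: False
        define E where "E i = {\<omega> \<in> space M. q \<le> \<bar>W (real i * d) \<omega> - W (real (i - 1) * d) \<omega>\<bar>}" for i :: nat
        have Em: "E i \<in> sets M" if "i \<ge> 1" for i
        proof -
          have "W (real i * d) \<in> borel_measurable M" "W (real (i - 1) * d) \<in> borel_measurable M"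
            using Wm dpos by auto
          then show ?thesis unfolding E_def by measurable
        qed
        have Ep: "measure M (E i) \<le> 2 * d^2" if "i \<ge> 1" for i
        proof -
          have diff: "real i * d - real (i - 1) * d = d" using that by (simp add: of_nat_diff algebra_simps)
          have "measure M (E i) \<le> 2 * exp (- (q^2) / (2 * (real i * d - real (i - 1) * d)))"
            unfolding E_def by (rule bm_tail[OF BM]) (use dpos that diff qpos in auto)
          also have "- (q^2) / (2 * (real i * d - real (i - 1) * d)) = 2 * ln d"
          proof -
            have "ln d < 0" using dpos True by simp
            then have "(sqrt (d * \<bar>ln d\<bar>))^2 = d * \<bar>ln d\<bar>" using dpos by (intro real_sqrt_pow2 mult_nonneg_nonneg) auto
            then have "(sqrt (- (d * ln d)))^2 = - (d * ln d)" using \<open>ln d < 0\<close> by simp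
            then show ?thesis unfolding diff q using dpos \<open>ln d < 0\<close> by (simp add: power_mult_distrib)
          qed
          also have "exp (2 * ln d) = d^2" using dpos
          proof -
            have "exp (2 * ln d) = exp (ln d + ln d)" by (metis mult_2)
            also have "\<dots> = d^2" using dpos by (simp only: exp_add exp_ln power2_eq_square)
            finally show ?thesis .
          qed
          finally show ?thesis .
        qed
        have sub: "A \<subseteq> (\<Union>i\<in>{1..N}. E i)"
        proof
          fix \<omega> assume \<omega>A: "\<omega> \<in> A"
          show "\<omega> \<in> (\<Union>i\<in>{1..N}. E i)"
          proof (rule ccontr)
            assume nb: "\<omega> \<notin> (\<Union>i\<in>{1..N}. E i)"
            have \<omega>s: "\<omega> \<in> space M" using \<omega>A unfolding A_def by auto
            have inc: "\<bar>W (real i * d) \<omega> - W (real (i - 1) * d) \<omega>\<bar> < q" if "i \<in> {1..N}" for i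
              using nb that \<omega>s unfolding E_def by force
            have osc0: "osc f (\<epsilon> * q) \<ge> 0" by (rule osc_facts(1)[OF f_bdd])
            have trm: "\<bar>(f (\<epsilon> * W (real i * d) \<omega>) - f (\<epsilon> * W (real (i - 1) * d) \<omega>)) *
                 (W (real i * d) \<omega> - W (real (i - 1) * d) \<omega>)\<bar> \<le> osc f (\<epsilon> * q) * q"
              if "i \<in> {1..N}" for i
            proof -
              have "\<bar>\<epsilon> * W (real (i - 1) * d) \<omega> - \<epsilon> * W (real i * d) \<omega>\<bar> < \<epsilon> * q"
                using inc[OF that] \<epsilon> by (simp add: abs_mult right_diff_distrib[symmetric] abs_minus_commute)
              then have "\<bar>f (\<epsilon> * W (real i * d) \<omega>) - f (\<epsilon> * W (real (i - 1) * d) \<omega>)\<bar> \<le> osc f (\<epsilon> * q)"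
                by (rule osc_facts(2)[OF f_bdd])
              then show ?thesis using inc[OF that] unfolding abs_mult
                by (intro mult_mono) auto
            qed
            have bound: "\<bar>disc_L f W T N \<epsilon> t \<omega>\<bar> \<le> \<delta>" if t: "t \<in> {0..T}" for t
            proof -
              have gi: "grid_index T N t \<le> N" unfolding grid_index_def
                by (rule Least_le) (use t N in auto)
              have "\<bar>disc_L f W T N \<epsilon> t \<omega>\<bar> \<le> (\<Sum>i\<in>{1..grid_index T N t}. osc f (\<epsilon> * q) * q)"
                unfolding disc_L_def d[symmetric]
                by (rule order_trans[OF sum_abs sum_mono]) (use trm gi in auto)
              also have "\<dots> \<le> (\<Sum>i\<in>{1..N}. osc f (\<epsilon> * q) * q)"
                by (rule sum_mono2) (use gi osc0 qpos in auto)
              also have "\<dots> = real N * q * osc f (\<epsilon> * q)" by simp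
              also have "\<dots> \<le> \<delta>"
              proof -
                have o: "osc f (\<epsilon> * q) \<le> q * \<delta> / (4 * T * \<bar>ln d\<bar>)"
                  using notB L T by (simp add: field_simps)
                have "real N * q * osc f (\<epsilon> * q) \<le> real N * q * (q * \<delta> / (4 * T * \<bar>ln d\<bar>))"
                  using o qpos by (intro mult_left_mono) auto
                also have "\<dots> = real N * q^2 * \<delta> / (4 * T * \<bar>ln d\<bar>)" by (simp add: power2_eq_square)
                also have "q^2 = 4 * (d * \<bar>ln d\<bar>)" unfolding q using dpos by (simp add: power_mult_distrib)
                also have "real N * (4 * (d * \<bar>ln d\<bar>)) * \<delta> / (4 * T * \<bar>ln d\<bar>) = \<delta>"
                  using L T Nd by (simp add: field_simps)
                finally show ?thesis .
              qed
              finally show ?thesis .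
            qed
            have "(SUP t\<in>{0..T}. \<bar>disc_L f W T N \<epsilon> t \<omega>\<bar>) \<le> \<delta>"
              by (rule cSUP_least) (use T bound in auto)
            then show False using \<omega>A unfolding A_def by auto
          qed
        qed
        have "measure M A \<le> measure M (\<Union>i\<in>{1..N}. E i)"
        proof (cases "A \<in> sets M")
          case True
          then show ?thesis using sub Em by (intro finite_measure_mono) auto
        next
          case False
          then show ?thesis by (simp add: measure_notin_sets)
        qed
        also have "\<dots> \<le> (\<Sum>i\<in>{1..N}. measure M (E i))"
          by (rule measure_UNION_le) (use Em in auto)
        also have "\<dots> \<le> (\<Sum>i\<in>{1..N}. 2 * d^2)"
          by (rule sum_mono) (use Ep in auto)
        also have "\<dots> = 2 * T * d" using Nd by (simp add: power2_eq_square)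
        also have "\<dots> \<le> measure M B + K * d" using B0 dpos unfolding K_def by (simp add: field_simps)
        finally show ?thesis .
      qed
    qed
    then show ?thesis unfolding A_def B_def .
  qed
  show ?thesis
  proof (intro exI[of _ K] conjI allI impI K)
    fix \<delta> \<epsilon> :: real assume "\<delta> > 0" "\<epsilon> > 0"
    then show "let d\<epsilon> = T / real (n \<epsilon>); q\<epsilon> = 2 * sqrt (d\<epsilon> * \<bar>ln d\<epsilon>\<bar>) in
      measure M {\<omega> \<in> space M. (SUP t\<in>{0..T}. \<bar>disc_L f W T (n \<epsilon>) \<epsilon> t \<omega>\<bar>) > \<delta>}
        \<le> measure M {\<omega> \<in> space M. \<bar>ln d\<epsilon>\<bar> * osc f (\<epsilon> * q\<epsilon>) > q\<epsilon> * \<delta> / (4 * T)}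
           + K * d\<epsilon>"
      unfolding Let_def by (intro main n_pos) auto
  qed
qed

end
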